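(* Let $(X,\tau_X,\partial_X)$ be a Polish topometric space, $(Y,\tau_Y)$ a Polish space, and $f\colon(Y,\tau_Y)\to(X,\tau_X)$ a continuous map with $\tau_X$-dense image such that for every open $U\subseteq Y$ and every $\varepsilon>0$ the set $(fU)_\varepsilon\subseteq X$ is open. Assume also that for every open $V\subseteq X$ and every $\varepsilon>0$ the set $(V)_\varepsilon$ is open. Then for every co-meagre $A\subseteq Y$, the $\partial_X$-closure $\overline{f(A)}^{\partial_X}$ is co-meagre in $X$.
   Context: A topometric space is a triple $(X,\tau,\partial)$ where $\tau$ is a topology and $\partial$ a metric whose topology refines $\tau$ and which is $\tau$-lower semi-continuous ($\{(x,y)\colon\partial(x,y)\le r\}$ is closed in $(X,\tau)^2$ for every $r$); it is Polish if $\tau$ is Polish. For $B\subseteq X$, $(B)_\varepsilon=\{x\colon\partial_X(x,B)<\varepsilon\}$. *)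

theory Defs
  imports "HOL-Analysis.Analysis"
begin

definition Polish_space :: "'a topology \<Rightarrow> bool" where
  "Polish_space X \<longleftrightarrow> completely_metrizable_space X \<and> separable_space X"

text \<open>Topometric space (X, tau, d): d is a metric on the carrier of tau whose topology
  refines tau, and d is tau-lower semicontinuous.\<close>
definition topometric_space :: "'a topology \<Rightarrow> ('a \<Rightarrow> 'a \<Rightarrow> real) \<Rightarrow> bool" where
  "topometric_space X d \<longleftrightarrow>
     Metric_space (topspace X) d \<and>
     (\<forall>U. openin X U \<longrightarrow> openin (Metric_space.mtopology (topspace X) d) U) \<and>
     (\<forall>r::real. closedin (prod_topology X X)
                 {(x, y). x \<in> topspace X \<and> y \<in> topspace X \<and> d x y \<le> r})"

definition Polish_topometric_space :: "'a topology \<Rightarrow> ('a \<Rightarrow> 'a \<Rightarrow> real) \<Rightarrow> bool" where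
  "Polish_topometric_space X d \<longleftrightarrow> topometric_space X d \<and> Polish_space X"

definition metric_nbhd :: "'a topology \<Rightarrow> ('a \<Rightarrow> 'a \<Rightarrow> real) \<Rightarrow> 'a set \<Rightarrow> real \<Rightarrow> 'a set" where
  "metric_nbhd X d B \<epsilon> = {x \<in> topspace X. (INF b\<in>B. ereal (d x b)) < ereal \<epsilon>}"

definition nowhere_dense_in :: "'a topology \<Rightarrow> 'a set \<Rightarrow> bool" where
  "nowhere_dense_in X S \<longleftrightarrow> S \<subseteq> topspace X \<and> X interior_of (X closure_of S) = {}"

definition meagre_in :: "'a topology \<Rightarrow> 'a set \<Rightarrow> bool" where
  "meagre_in X S \<longleftrightarrow> S \<subseteq> topspace X \<and>
     (\<exists>\<F>. countable \<F> \<and> (\<forall>N\<in>\<F>. nowhere_dense_in X N) \<and> S \<subseteq> \<Union>\<F>)"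

definition comeagre_in :: "'a topology \<Rightarrow> 'a set \<Rightarrow> bool" where
  "comeagre_in X A \<longleftrightarrow> A \<subseteq> topspace X \<and> meagre_in X (topspace X - A)"

end

theory Submission
  imports Defs
begin

lemma nb_iff: "x \<in> metric_nbhd X d B e \<longleftrightarrow> x \<in> topspace X \<and> (\<exists>b\<in>B. d x b < e)"
  by (simp add: metric_nbhd_def INF_less_iff)

lemma nd_open_diff:
  assumes "openin X S" "V \<subseteq> X closure_of S" "V \<subseteq> topspace X"
  shows "nowhere_dense_in X (V - S)"
proof -
  have c1: "X closure_of (V - S) \<subseteq> topspace X - S"
    by (rule closure_of_minimal) (use assms in \<open>auto intro: closedin_diff\<close>)
  have c2: "X closure_of (V - S) \<subseteq> X closure_of S"
    by (rule closure_of_minimal) (use assms(2) in auto)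
  have "X interior_of (X closure_of (V - S)) = {}"
  proof -
    let ?T = "X interior_of (X closure_of (V - S))"
    have "openin X ?T" by simp
    moreover have "?T \<inter> S = {}" using c1 interior_of_subset[of X "X closure_of (V - S)"] by blast
    ultimately have "?T \<inter> X closure_of S = {}" using openin_Int_closure_of_eq_empty[of X ?T S] by simp
    moreover have "?T \<subseteq> X closure_of S" using c2 interior_of_subset[of X "X closure_of (V - S)"] by (rule order_trans[rotated])
    ultimately show ?thesis by blast
  qed
  then show ?thesis using assms by (auto simp: nowhere_dense_in_def)
qed

lemma nd_compl_dense:
  assumes "openin X V" "X closure_of V = topspace X"
  shows "nowhere_dense_in X (topspace X - V)"
proof -
  have "X closure_of (topspace X - V) = topspace X - V"
    using assms(1) by (simp add: closure_of_complement interior_of_openin)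
  then show ?thesis unfolding nowhere_dense_in_def
    using assms(2) by (simp add: interior_of_complement)
qed

lemma comeagre_dense_opens:
  assumes "comeagre_in Y A"
  shows "\<exists>W. (\<forall>n::nat. openin Y (W n) \<and> Y closure_of (W n) = topspace Y) \<and> topspace Y \<inter> (\<Inter>n. W n) \<subseteq> A"
proof -
  obtain F where F: "countable F" "\<forall>N\<in>F. nowhere_dense_in Y N" "topspace Y - A \<subseteq> \<Union>F"
    using assms unfolding comeagre_in_def meagre_in_def by blast
  let ?G = "insert {} F"
  have G: "countable ?G" "?G \<noteq> {}" using F by auto
  define W where "W n = topspace Y - Y closure_of (from_nat_into ?G n)" for n
  have nd: "Y interior_of (Y closure_of N) = {}" if "N \<in> ?G" for N
    using that F(2) by (auto simp: nowhere_dense_in_def)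
  have W1: "openin Y (W n) \<and> Y closure_of (W n) = topspace Y" for n
    using nd[OF from_nat_into[OF G(2)]] unfolding W_def by (intro conjI openin_diff openin_topspace closedin_closure_of) (simp add: closure_of_complement)
  have W2: "topspace Y \<inter> (\<Inter>n. W n) \<subseteq> A"
  proof
    fix y assume y: "y \<in> topspace Y \<inter> (\<Inter>n. W n)"
    show "y \<in> A"
    proof (rule ccontr)
      assume "y \<notin> A"
      then obtain N where N: "N \<in> F" "y \<in> N" using F(3) y by blast
      have "N \<in> ?G" using N(1) by simp
      then obtain n where n: "from_nat_into ?G n = N" using from_nat_into_surj[OF G(1)] by metis
      have "N \<subseteq> topspace Y" using F(2) N(1) by (simp add: nowhere_dense_in_def)
      then have "y \<in> Y closure_of N" using closure_of_subset[of N Y] N(2) by blast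
      then have "y \<notin> W n" unfolding W_def n by simp
      then show False using y by blast
    qed
  qed
  show ?thesis
    apply (rule exI[of _ W])
    using W1 W2 by simp
qed

definition SS :: "'a topology \<Rightarrow> ('a\<Rightarrow>'a\<Rightarrow>real) \<Rightarrow> ('b\<Rightarrow>'a) \<Rightarrow> 'b set \<Rightarrow> ('b\<Rightarrow>'b\<Rightarrow>real)
   \<Rightarrow> 'b set \<Rightarrow> (nat \<Rightarrow> 'b set) \<Rightarrow> real \<Rightarrow> 'b set \<Rightarrow> nat \<Rightarrow> 'a set" where
"SS X \<delta> f M \<rho> D W e U n = \<Union>{metric_nbhd X \<delta> (f ` Metric_space.mball M \<rho> c r) e | c r.
   c \<in> D \<and> r \<in> \<rat> \<and> 0 < r \<and> r < 1 / real (Suc n) \<and> Metric_space.mcball M \<rho> c r \<subseteq> U \<inter> W n}"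

context Metric_space begin

lemma SS_dense:
  assumes f: "continuous_map mtopology X f" and Xm: "Metric_space (topspace X) \<delta>"
    and D: "mtopology closure_of D = M"
    and U: "openin mtopology U" and Wn: "openin mtopology (W n)" "mtopology closure_of (W n) = M"
    and nbo: "\<And>V. openin X V \<Longrightarrow> openin X (metric_nbhd X \<delta> V e)"
  shows "metric_nbhd X \<delta> (f ` U) e \<subseteq> X closure_of (SS X \<delta> f M d D W e U n)"
proof
  fix x assume x: "x \<in> metric_nbhd X \<delta> (f ` U) e"
  then have xX: "x \<in> topspace X" and "\<exists>u\<in>U. \<delta> x (f u) < e" by (auto simp: nb_iff)
  then obtain u where u: "u \<in> U" "\<delta> x (f u) < e" by blast
  have UM: "U \<subseteq> M" using openin_subset[OF U] by simp
  have fuX: "f u \<in> topspace X" using f u UM by (auto simp: continuous_map_def Pi_iff)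
  show "x \<in> X closure_of (SS X \<delta> f M d D W e U n)"
    unfolding in_closure_of
  proof (intro conjI xX allI impI)
    fix T assume T: "x \<in> T \<and> openin X T"
    have TX: "T \<subseteq> topspace X" using T openin_subset by auto
    have fuT: "f u \<in> metric_nbhd X \<delta> T e"
      using T u fuX xX Metric_space.commute[OF Xm] by (auto simp: nb_iff)
    define Q where "Q = {y \<in> topspace mtopology. f y \<in> metric_nbhd X \<delta> T e} \<inter> U"
    have Qo: "openin mtopology Q" unfolding Q_def
      using openin_continuous_map_preimage[OF f nbo] T U by blast
    have "u \<in> Q" using u UM fuT by (auto simp: Q_def)
    then have "W n \<inter> Q \<noteq> {}" using Wn(2) Qo dense_intersects_open[of mtopology "W n"] by auto
    then obtain z where z: "z \<in> W n" "z \<in> Q" by blast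
    have "openin mtopology (Q \<inter> W n)" using Qo Wn(1) by blast
    then have "\<exists>s>0. mball z s \<subseteq> Q \<inter> W n"
      using z unfolding openin_mtopology by auto
    then obtain s where s: "s > 0" "mball z s \<subseteq> Q \<inter> W n" by blast
    have zM: "z \<in> M" using z Q_def UM by blast
    define t where "t = min (s/2) (1 / real (Suc n))"
    have t: "t > 0" using s by (simp add: t_def)
    have "z \<in> mtopology closure_of D" using D zM by simp
    then obtain c where c: "c \<in> D" "c \<in> mball z t" using t by (auto simp: metric_closure_of)
    then obtain r where r: "r \<in> \<rat>" "d z c < r" "r < t" using Rats_dense_in_real by force
    have cM: "c \<in> M" using c by auto
    have sub: "mcball c r \<subseteq> mball z s"
    proof
      fix w assume w: "w \<in> mcball c r"
      then have "d z w \<le> d z c + d c w" using triangle zM cM by auto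
      also have "\<dots> < s" using w r t_def by auto
      finally show "w \<in> mball z s" using zM w by auto
    qed
    have rpos: "0 < r" using r(2) zM cM by (metis nonneg le_less_trans)
    have zb: "z \<in> mball c r" using r zM cM commute by auto
    have "f z \<in> metric_nbhd X \<delta> T e" using z by (simp add: Q_def)
    then obtain o' where o': "o' \<in> T" "\<delta> (f z) o' < e" by (auto simp: nb_iff)
    have fzX: "f z \<in> topspace X" using f zM by (simp add: continuous_map_def Pi_iff)
    have "o' \<in> metric_nbhd X \<delta> (f ` mball c r) e"
      using o' zb TX fzX Metric_space.commute[OF Xm, of "f z" o'] by (auto simp: nb_iff)
    moreover have "mcball c r \<subseteq> U \<inter> W n" "r < 1 / real (Suc n)"
      using sub s r unfolding Q_def t_def by auto
    ultimately have "o' \<in> SS X \<delta> f M d D W e U n"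
      unfolding SS_def using c r rpos by blast
    then show "\<exists>y. y \<in> SS X \<delta> f M d D W e U n \<and> y \<in> T" using o' by blast
  qed
qed

end

context Metric_space begin

lemma core:
  assumes mc: "mcomplete" and f: "continuous_map mtopology X f" and Xm: "Metric_space (topspace X) \<delta>"
    and C: "closedin (prod_topology X X) {(a,b). a \<in> topspace X \<and> b \<in> topspace X \<and> \<delta> a b \<le> e}"
    and WA: "M \<inter> (\<Inter>n. W n) \<subseteq> A"
    and x0: "x \<in> metric_nbhd X \<delta> (f ` M) e"
    and xS: "\<And>U n. U \<in> insert M {mball c r | c r. c \<in> D \<and> r \<in> \<rat> \<and> 0 < r} \<Longrightarrow>
              x \<in> metric_nbhd X \<delta> (f ` U) e \<Longrightarrow> x \<in> SS X \<delta> f M d D W e U n"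
  shows "\<exists>y\<in>A. \<delta> x (f y) \<le> e"
proof -
  define good where "good k p \<longleftrightarrow> fst p \<in> D \<and> snd p \<in> \<rat> \<and> 0 < snd p \<and> snd p < 1 / real (Suc k)
      \<and> mcball (fst p) (snd p) \<subseteq> W k \<and> x \<in> metric_nbhd X \<delta> (f ` mball (fst p) (snd p)) e" for k p
  have start: "\<exists>p. good 0 p"
  proof -
    have "x \<in> SS X \<delta> f M d D W e M 0" using xS x0 by blast
    then obtain c r where "c \<in> D \<and> r \<in> \<rat> \<and> 0 < r \<and> r < 1 / real (Suc 0) \<and> mcball c r \<subseteq> M \<inter> W 0"
       "x \<in> metric_nbhd X \<delta> (f ` mball c r) e"
      unfolding SS_def by blast
    then have "good 0 (c, r)" by (auto simp: good_def)
    then show ?thesis by blast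
  qed
  have step: "\<exists>q. good (Suc k) q \<and> mcball (fst q) (snd q) \<subseteq> mball (fst p) (snd p)" if g: "good k p" for k p
  proof -
    have "mball (fst p) (snd p) \<in> insert M {mball c r | c r. c \<in> D \<and> r \<in> \<rat> \<and> 0 < r}"
      using g by (auto simp: good_def)
    then have "x \<in> SS X \<delta> f M d D W e (mball (fst p) (snd p)) (Suc k)"
      using xS g by (auto simp: good_def)
    then obtain c r where "c \<in> D \<and> r \<in> \<rat> \<and> 0 < r \<and> r < 1 / real (Suc (Suc k)) \<and> mcball c r \<subseteq> mball (fst p) (snd p) \<inter> W (Suc k)"
       "x \<in> metric_nbhd X \<delta> (f ` mball c r) e"
      unfolding SS_def by blast
    then have "good (Suc k) (c, r) \<and> mcball c r \<subseteq> mball (fst p) (snd p)" by (auto simp: good_def)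
    then show ?thesis by (intro exI[of _ "(c,r)"]) simp
  qed
  obtain g where g: "\<And>n. good n (g n) \<and> mcball (fst (g (Suc n))) (snd (g (Suc n))) \<subseteq> mball (fst (g n)) (snd (g n))"
    using dependent_nat_choice[of good "\<lambda>n p q. mcball (fst q) (snd q) \<subseteq> mball (fst p) (snd p)", OF start step] by blast
  define B where "B n = mball (fst (g n)) (snd (g n))" for n
  define CB where "CB n = mcball (fst (g n)) (snd (g n))" for n
  have BC: "B n \<subseteq> CB n" for n unfolding B_def CB_def by (rule mball_subset_mcball)
  have nest1: "B (Suc n) \<subseteq> B n" for n using g[of n] BC[of "Suc n"] unfolding B_def CB_def by blast
  have nest: "B m \<subseteq> B k" if "k \<le> m" for k m
    using that by (induction m rule: dec_induct) (use nest1 in blast)+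
  have CW: "CB n \<subseteq> W n" for n using g[of n] by (simp add: good_def CB_def)
  have rsmall: "snd (g n) < 1 / real (Suc n)" for n using g[of n] by (simp add: good_def)
  have "\<forall>n. \<exists>y. y \<in> B n \<and> \<delta> x (f y) < e"
  proof
    fix n
    have "x \<in> metric_nbhd X \<delta> (f ` B n) e" using g[of n] by (simp add: good_def B_def)
    then show "\<exists>y. y \<in> B n \<and> \<delta> x (f y) < e" unfolding nb_iff by blast
  qed
  then obtain yy where yy: "\<And>n. yy n \<in> B n" "\<And>n. \<delta> x (f (yy n)) < e" by metis
  have yyM: "yy n \<in> M" for n using yy(1)[of n] by (auto simp: B_def)
  have "MCauchy yy"
    unfolding MCauchy_def
  proof (intro conjI allI impI)
    show "range yy \<subseteq> M" using yyM by auto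
    fix \<epsilon> :: real assume "\<epsilon> > 0"
    then obtain N where N: "inverse (real (Suc N)) < \<epsilon>/2" using reals_Archimedean[of "\<epsilon>/2"] by auto
    show "\<exists>N. \<forall>n n'. N \<le> n \<longrightarrow> N \<le> n' \<longrightarrow> d (yy n) (yy n') < \<epsilon>"
    proof (intro exI allI impI)
      fix n n' assume "N \<le> n" "N \<le> n'"
      then have a: "yy n \<in> B N" "yy n' \<in> B N" using nest yy(1) by blast+
      let ?c = "fst (g N)" and ?r = "snd (g N)"
      have "d (yy n) (yy n') \<le> d (yy n) ?c + d ?c (yy n')" using a triangle unfolding B_def by auto
      also have "\<dots> < 2 * ?r" using a commute unfolding B_def by auto
      also have "\<dots> < \<epsilon>" using rsmall[of N] N by (simp add: inverse_eq_divide)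
      finally show "d (yy n) (yy n') < \<epsilon>" .
    qed
  qed
  then obtain y where lim: "limitin mtopology yy y sequentially" using mc mcomplete_def by blast
  have yCB: "y \<in> CB k" for k
  proof (rule limitin_closedin[OF lim])
    show "closedin mtopology (CB k)" unfolding CB_def by simp
    show "\<forall>\<^sub>F n in sequentially. yy n \<in> CB k"
      using nest yy(1) BC unfolding eventually_sequentially by blast
  qed simp
  have yM: "y \<in> M" using yCB[of 0] unfolding CB_def by auto
  have yA: "y \<in> A" using WA yM yCB CW by blast
  have x: "x \<in> topspace X" using x0 by (simp add: nb_iff)
  have limf: "limitin X (f \<circ> yy) (f y) sequentially" using continuous_map_limit[OF f lim] .
  have lim2: "limitin (prod_topology X X) (\<lambda>n. (x, f (yy n))) (x, f y) sequentially"
    unfolding limitin_pairwise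
  proof (intro conjI)
    show "limitin X (fst \<circ> (\<lambda>n. (x, f (yy n)))) (fst (x, f y)) sequentially"
      using x by (simp add: o_def)
    show "limitin X (snd \<circ> (\<lambda>n. (x, f (yy n)))) (snd (x, f y)) sequentially"
      using limf by (simp add: o_def)
  qed
  have fyy: "f (yy n) \<in> topspace X" for n using f yyM[of n] by (simp add: continuous_map_def Pi_iff)
  have ev: "\<forall>\<^sub>F n in sequentially. (x, f (yy n)) \<in> {(a,b). a \<in> topspace X \<and> b \<in> topspace X \<and> \<delta> a b \<le> e}"
    using x fyy yy(2) by (simp add: less_imp_le)
  have "(x, f y) \<in> {(a,b). a \<in> topspace X \<and> b \<in> topspace X \<and> \<delta> a b \<le> e}"
    using limitin_closedin[OF lim2 C ev] by simp
  then show ?thesis using yA by auto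
qed

end

theorem theorem5p2:
  fixes X :: "'a topology" and d :: "'a \<Rightarrow> 'a \<Rightarrow> real"
    and Y :: "'b topology" and f :: "'b \<Rightarrow> 'a"
  assumes "Polish_topometric_space X d"
    and "Polish_space Y"
    and "continuous_map Y X f"
    and "X closure_of (f ` topspace Y) = topspace X"
    and "\<And>U \<epsilon>. openin Y U \<Longrightarrow> \<epsilon> > 0 \<Longrightarrow> openin X (metric_nbhd X d (f ` U) \<epsilon>)"
    and "\<And>V \<epsilon>. openin X V \<Longrightarrow> \<epsilon> > 0 \<Longrightarrow> openin X (metric_nbhd X d V \<epsilon>)"
    and "comeagre_in Y A"
  shows "comeagre_in X (Metric_space.mtopology (topspace X) d closure_of (f ` A))"
proof -
  note fc = assms(3) and dense = assms(4) and op5 = assms(5) and op6 = assms(6)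
  have Xm: "Metric_space (topspace X) d"
    and C: "\<And>r. closedin (prod_topology X X) {(x, y). x \<in> topspace X \<and> y \<in> topspace X \<and> d x y \<le> r}"
    using assms(1) by (auto simp: Polish_topometric_space_def topometric_space_def)
  interpret Xm: Metric_space "topspace X" d by (rule Xm)
  obtain M \<rho> where Ym: "Metric_space M \<rho>" "Metric_space.mcomplete M \<rho>" "Y = Metric_space.mtopology M \<rho>"
    using assms(2) by (auto simp: Polish_space_def completely_metrizable_space_def)
  interpret Ym: Metric_space M \<rho> by (rule Ym(1))
  have tY: "topspace Y = M" using Ym(3) by simp
  obtain D where D: "countable D" "D \<subseteq> M" "Y closure_of D = M"
    using assms(2) tY by (auto simp: Polish_space_def separable_space_def)
  obtain W :: "nat \<Rightarrow> 'b set" where W: "\<And>n. openin Y (W n)" "\<And>n. Y closure_of (W n) = M" "M \<inter> (\<Inter>n. W n) \<subseteq> A"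
    using comeagre_dense_opens[OF assms(7)] tY by blast
  have AM: "A \<subseteq> M" using assms(7) tY by (simp add: comeagre_in_def)
  have fM: "f y \<in> topspace X" if "y \<in> M" for y using fc that tY by (simp add: continuous_map_def Pi_iff)
  define e where "e k = 1 / real (Suc k)" for k
  have epos: "e k > 0" for k by (simp add: e_def)
  define NB where "NB k B = metric_nbhd X d B (e k)" for k B
  define F where "F = insert M {Ym.mball c r | c r. c \<in> D \<and> r \<in> \<rat> \<and> 0 < r}"
  have Fo: "openin Y U" if "U \<in> F" for U using that tY Ym(3) by (auto simp: F_def)
  have "{Ym.mball c r | c r. c \<in> D \<and> r \<in> \<rat> \<and> 0 < r} = (\<lambda>(c,r). Ym.mball c r) ` (D \<times> (\<rat> \<inter> {0<..}))"
    by auto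
  moreover have "countable (D \<times> (\<rat> \<inter> {0<..}))"
    using D(1) countable_rat by (intro countable_SIGMA countable_Int1) auto
  ultimately have Fc: "countable F" unfolding F_def by (metis countable_image countable_insert)
  define SSk where "SSk k U n = SS X d f M \<rho> D W (e k) U n" for k U n
  define N where "N = range (\<lambda>k. topspace X - NB k (f ` M)) \<union>
      (\<lambda>(k,U,n). NB k (f ` U) - SSk k U n) ` (UNIV \<times> F \<times> UNIV)"
  have Nc: "countable N" unfolding N_def using Fc by simp
  have Nnd: "\<forall>S\<in>N. nowhere_dense_in X S"
  proof
    fix S assume "S \<in> N"
    then consider k where "S = topspace X - NB k (f ` M)"
      | k U n where "U \<in> F" "S = NB k (f ` U) - SSk k U n" unfolding N_def by auto
    then show "nowhere_dense_in X S"
    proof cases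
      case (1 k)
      have o: "openin X (NB k (f ` M))" unfolding NB_def using op5[OF openin_topspace epos] tY by simp
      have "f ` M \<subseteq> NB k (f ` M)"
      proof
        fix z assume "z \<in> f ` M"
        then obtain y where y: "y \<in> M" "z = f y" by blast
        have "d (f y) (f y) < e k" using fM[OF y(1)] epos[of k] by simp
        then show "z \<in> NB k (f ` M)" using y fM[OF y(1)] unfolding NB_def nb_iff by blast
      qed
      then have "X closure_of (f ` M) \<subseteq> X closure_of (NB k (f ` M))" by (rule closure_of_mono)
      then have "X closure_of (NB k (f ` M)) = topspace X"
        using dense tY closure_of_subset_topspace[of X "NB k (f ` M)"] by auto
      then show ?thesis using nd_compl_dense[OF o] 1 by simp
    next
      case (2 k U n)
      have so: "openin X (SSk k U n)" unfolding SSk_def SS_def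
        using op5 epos Ym(3) by (intro openin_Union) auto
      have "NB k (f ` U) \<subseteq> X closure_of (SSk k U n)" unfolding NB_def SSk_def
      proof (rule Ym.SS_dense)
        show "continuous_map Ym.mtopology X f" using fc Ym(3) by simp
        show "Ym.mtopology closure_of D = M" using D(3) Ym(3) by simp
        show "openin Ym.mtopology U" using Fo[OF 2(1)] Ym(3) by simp
        show "openin Ym.mtopology (W n)" "Ym.mtopology closure_of W n = M" using W Ym(3) by auto
        show "\<And>V. openin X V \<Longrightarrow> openin X (metric_nbhd X d V (e k))" using op6 epos by blast
      qed (rule Xm)
      moreover have "NB k (f ` U) \<subseteq> topspace X" by (auto simp: NB_def nb_iff)
      ultimately show ?thesis using nd_open_diff[OF so] 2 by simp
    qed
  qed
  have cover: "topspace X - Xm.mtopology closure_of (f ` A) \<subseteq> \<Union>N"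
  proof
    fix x assume x: "x \<in> topspace X - Xm.mtopology closure_of (f ` A)"
    show "x \<in> \<Union>N"
    proof (rule ccontr)
      assume nx: "x \<notin> \<Union>N"
      have close: "\<exists>y\<in>A. d x (f y) \<le> e k" for k
      proof (rule Ym.core[where W=W and D=D and X=X and f=f and \<delta>=d and e="e k" and x=x and A=A])
        show "Ym.mcomplete" using Ym(2) .
        show "continuous_map Ym.mtopology X f" using fc Ym(3) by simp
        show "closedin (prod_topology X X) {(a, b). a \<in> topspace X \<and> b \<in> topspace X \<and> d a b \<le> e k}"
          by (rule C)
        show "M \<inter> (\<Inter>n. W n) \<subseteq> A" by (rule W(3))
        have "topspace X - NB k (f ` M) \<in> N" unfolding N_def by (intro UnI1 rangeI)
        then show "x \<in> metric_nbhd X d (f ` M) (e k)" using nx x unfolding NB_def by blast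
        show "x \<in> SS X d f M \<rho> D W (e k) U n"
          if "U \<in> insert M {Ym.mball c r |c r. c \<in> D \<and> r \<in> \<rat> \<and> 0 < r}"
             "x \<in> metric_nbhd X d (f ` U) (e k)" for U n
        proof -
          have "U \<in> F" using that(1) by (simp add: F_def)
          then have "NB k (f ` U) - SSk k U n \<in> N" unfolding N_def
            by (intro UnI2 image_eqI[where x="(k,U,n)"]) auto
          then show ?thesis using nx that(2) unfolding NB_def SSk_def by blast
        qed
      qed (rule Xm)
      have "x \<in> Xm.mtopology closure_of (f ` A)"
        unfolding Xm.metric_closure_of
      proof (intro CollectI conjI allI impI)
        show "x \<in> topspace X" using x by blast
        fix r :: real assume "r > 0"
        then obtain k where k: "inverse (real (Suc k)) < r" using reals_Archimedean by blast
        obtain y where y: "y \<in> A" "d x (f y) \<le> e k" using close by blast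
        have "f y \<in> Xm.mball x r" using y k x fM AM by (auto simp: e_def inverse_eq_divide)
        then show "\<exists>z\<in>f ` A. z \<in> Xm.mball x r" using y by blast
      qed
      then show False using x by blast
    qed
  qed
  show ?thesis unfolding comeagre_in_def meagre_in_def
  proof (intro conjI)
    show "Xm.mtopology closure_of (f ` A) \<subseteq> topspace X"
      using closure_of_subset_topspace[of Xm.mtopology] by simp
    show "topspace X - Xm.mtopology closure_of (f ` A) \<subseteq> topspace X" by blast
    show "\<exists>\<F>. countable \<F> \<and> (\<forall>N\<in>\<F>. nowhere_dense_in X N) \<and> topspace X - Xm.mtopology closure_of (f ` A) \<subseteq> \<Union>\<F>"
      using Nc Nnd cover by blast
  qed
qed

end
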